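(* Let $E$ be a complex vector space of dimension $e$, let $U$ be a complex symplectic vector space of dimension $2k$ ($k\ge1$), and let $V=\operatorname{Sym}(E\otimes U)$ with the commuting actions of $\mathfrak{g}=\mathfrak{sp}(U)$ and $H=\mathfrak{gl}(E)$. Write $U=(U_1\oplus U_1^* )\oplus\cdots\oplus(U_k\oplus U_k^* )$ with $U_i,U_i^*$ lines such that the form pairs $U_i$ with $U_i^*$ and the summands $U_i\oplus U_i^*$ are mutually orthogonal; let the Cartan subalgebra of $\mathfrak{sp}(U)$ be the elements preserving each of these lines, and identify a weight $\chi$ with the $k$-tuple $(\chi_1,\dots,\chi_k)$ where $\varepsilon_i$ is the weight on $U_i$ (so $-\varepsilon_i$ is the weight on $U_i^*$). For $n\in\mathbf{Z}$ let $L_n=\bigoplus_{d\ge0}\operatorname{Sym}^d(E)\otimes\operatorname{Sym}^{d+n}(E)$ (with $\operatorname{Sym}^m=0$ for $m<0$). Then for every $\chi\in\mathbf{Z}^k$, as $H$-representations, \[ V_\chi\cong L_{\chi_1}\otimes\cdots\otimes L_{\chi_k}. \]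
   Context: $V_\chi$ denotes the $\chi$-weight space of $V$ for the Cartan subalgebra described in the claim. *)

theory Defs
  imports Complex_Main "HOL-Library.Poly_Mapping"
begin

text \<open>Polynomials with complex coefficients in the variables of type 'v
  (i.e. the symmetric algebra of the complex vector space with basis 'v):
  finitely supported maps from monomials (finitely supported exponent vectors)
  to coefficients.\<close>
type_synonym 'v cpoly = "('v \<Rightarrow>\<^sub>0 nat) \<Rightarrow>\<^sub>0 complex"

definition cconst :: "complex \<Rightarrow> 'v cpoly" where
  "cconst c = Poly_Mapping.single 0 c"

definition cvar :: "'v \<Rightarrow> 'v cpoly" where
  "cvar v = Poly_Mapping.single (Poly_Mapping.single v 1) 1"

definition cpderiv :: "'v \<Rightarrow> 'v cpoly \<Rightarrow> 'v cpoly" where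
  "cpderiv v f = (\<Sum>m\<in>Poly_Mapping.keys (f::'v cpoly). Poly_Mapping.single (m - Poly_Mapping.single v 1)
                      (Poly_Mapping.lookup f m * of_nat (Poly_Mapping.lookup (m::'v \<Rightarrow>\<^sub>0 nat) v)))"

text \<open>The action (as a derivation) on Sym(W), W with finite basis 'v, of the
  endomorphism of W sending the basis vector v to the sum over w of c v w times w.\<close>
definition der :: "('v::finite \<Rightarrow> 'v \<Rightarrow> complex) \<Rightarrow> 'v cpoly \<Rightarrow> 'v cpoly" where
  "der c f = (\<Sum>v\<in>UNIV. cpderiv v f * (\<Sum>w\<in>UNIV. cconst (c v w) * cvar w))"

text \<open>Matrices: X b a is the coefficient of basis vector b in X(basis vector a).\<close>

text \<open>Action of gl(E) (E with basis 'e) on Sym(E \<otimes> U) (U with basis 'u),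
  variable (a,j) standing for e_a \<otimes> u_j.\<close>
definition actE :: "('e::finite \<Rightarrow> 'e \<Rightarrow> complex) \<Rightarrow> ('e \<times> 'u::finite) cpoly \<Rightarrow> ('e \<times> 'u) cpoly" where
  "actE X = der (\<lambda>(a,j) (b,j'). if j' = j then X b a else 0)"

definition actU :: "('u::finite \<Rightarrow> 'u \<Rightarrow> complex) \<Rightarrow> ('e::finite \<times> 'u) cpoly \<Rightarrow> ('e \<times> 'u) cpoly" where
  "actU A = der (\<lambda>(a,j) (b,j'). if b = a then A j' j else 0)"

text \<open>U = C^{2k} with basis indexed by 'k \<times> bool: (i,True) spans U_i, (i,False) spans U_i^*.\<close>
definition basisU :: "'k \<times> bool \<Rightarrow> ('k \<times> bool \<Rightarrow> complex)" where
  "basisU j = (\<lambda>j'. if j' = j then 1 else 0)"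

definition matvec :: "('u::finite \<Rightarrow> 'u \<Rightarrow> complex) \<Rightarrow> ('u \<Rightarrow> complex) \<Rightarrow> ('u \<Rightarrow> complex)" where
  "matvec A u = (\<lambda>j. \<Sum>j'\<in>UNIV. A j j' * u j')"

definition omega :: "('k::finite \<times> bool \<Rightarrow> complex) \<Rightarrow> ('k \<times> bool \<Rightarrow> complex) \<Rightarrow> complex" where
  "omega u v = (\<Sum>i\<in>UNIV. u (i,True) * v (i,False) - u (i,False) * v (i,True))"

definition sp :: "('k::finite \<times> bool \<Rightarrow> 'k \<times> bool \<Rightarrow> complex) set" where
  "sp = {A. \<forall>u v. omega (matvec A u) v + omega u (matvec A v) = 0}"

definition cartan :: "('k::finite \<times> bool \<Rightarrow> 'k \<times> bool \<Rightarrow> complex) set" where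
  "cartan = {A \<in> sp. \<forall>j. \<exists>c. matvec A (basisU j) = (\<lambda>x. c * basisU j x)}"

text \<open>The weight (chi_1,...,chi_k) = sum chi_i eps_i, eps_i(A) = eigenvalue of A on U_i.\<close>
definition wt :: "('k::finite \<Rightarrow> int) \<Rightarrow> ('k \<times> bool \<Rightarrow> 'k \<times> bool \<Rightarrow> complex) \<Rightarrow> complex" where
  "wt chi A = (\<Sum>i\<in>UNIV. of_int (chi i) * A (i,True) (i,True))"

definition Vwt :: "('k::finite \<Rightarrow> int) \<Rightarrow> ('e::finite \<times> ('k \<times> bool)) cpoly set" where
  "Vwt chi = {f. \<forall>A\<in>cartan. actU A f = cconst (wt chi A) * f}"

text \<open>Sym(E) \<otimes> Sym(E) = Sym(E \<oplus> E), variables (False,a) for the first factor,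
  (True,a) for the second; L_n = sum over d of Sym^d(E) \<otimes> Sym^(d+n)(E).\<close>
definition blkdeg :: "bool \<Rightarrow> ((bool \<times> 'e::finite) \<Rightarrow>\<^sub>0 nat) \<Rightarrow> nat" where
  "blkdeg b m = (\<Sum>a\<in>UNIV. Poly_Mapping.lookup m (b,a))"

definition Lsp :: "int \<Rightarrow> (bool \<times> 'e::finite) cpoly set" where
  "Lsp n = {f. \<forall>m\<in>Poly_Mapping.keys f. \<exists>d::nat. blkdeg False m = d \<and> int (blkdeg True m) = int d + n}"

definition actL :: "('e::finite \<Rightarrow> 'e \<Rightarrow> complex) \<Rightarrow> (bool \<times> 'e) cpoly \<Rightarrow> (bool \<times> 'e) cpoly" where
  "actL X = der (\<lambda>(b,a) (b',a'). if b' = b then X a' a else 0)"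

text \<open>Embedding of the i-th tensor factor: (Sym(E)\<otimes>Sym(E))^{\<otimes>k} = Sym(\<oplus>_i (E \<oplus> E)).\<close>
definition embmon :: "'k \<Rightarrow> ('v \<Rightarrow>\<^sub>0 nat) \<Rightarrow> ('k \<times> 'v \<Rightarrow>\<^sub>0 nat)" where
  "embmon i m = (\<Sum>v\<in>Poly_Mapping.keys m. Poly_Mapping.single (i,v) (Poly_Mapping.lookup m v))"

definition emb :: "'k \<Rightarrow> 'v cpoly \<Rightarrow> ('k \<times> 'v) cpoly" where
  "emb i f = (\<Sum>m\<in>Poly_Mapping.keys f. Poly_Mapping.single (embmon i m) (Poly_Mapping.lookup f m))"

definition cspan :: "'v cpoly set \<Rightarrow> 'v cpoly set" where
  "cspan S = {\<Sum>j<(N::nat). cconst (c j) * g j | N c g. \<forall>j<N. g j \<in> S}"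

definition Ltens :: "('k::finite \<Rightarrow> int) \<Rightarrow> ('k \<times> (bool \<times> 'e::finite)) cpoly set" where
  "Ltens chi = cspan {\<Prod>i\<in>UNIV. emb i (f i) | f. \<forall>i. f i \<in> Lsp (chi i)}"

definition actT :: "('e::finite \<Rightarrow> 'e \<Rightarrow> complex) \<Rightarrow> ('k::finite \<times> (bool \<times> 'e)) cpoly \<Rightarrow> ('k \<times> (bool \<times> 'e)) cpoly" where
  "actT X = der (\<lambda>(i,b,a) (i',b',a'). if (i',b') = (i,b) then X a' a else 0)"

end

theory Submission
  imports Defs
begin

abbreviation "lk \<equiv> Poly_Mapping.lookup"

lemma eq_add_single:
  fixes n l :: "'v \<Rightarrow>\<^sub>0 nat"
  shows "(n = l + Poly_Mapping.single w 1) \<longleftrightarrow> (0 < lk n w \<and> l = n - Poly_Mapping.single w 1)"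
proof
  assume "n = l + Poly_Mapping.single w 1"
  then show "0 < lk n w \<and> l = n - Poly_Mapping.single w 1"
    by (auto simp: poly_mapping_eq_iff fun_eq_iff lookup_add lookup_minus lookup_single when_def)
next
  assume a: "0 < lk n w \<and> l = n - Poly_Mapping.single w 1"
  show "n = l + Poly_Mapping.single w 1"
    by (rule poly_mapping_eqI) (use a in \<open>auto simp: lookup_add lookup_minus lookup_single when_def\<close>)
qed

lemma lookup_mult_var:
  fixes p :: "'v cpoly"
  shows "lk (p * Poly_Mapping.single (Poly_Mapping.single w 1) a) n
     = (if 0 < lk n w then lk p (n - Poly_Mapping.single w 1) * a else 0)"
proof -
  have "lk (p * Poly_Mapping.single (Poly_Mapping.single w 1) a) n
     = (\<Sum>l. lk p l * (a when n = l + Poly_Mapping.single w 1))"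
  proof -
    have "(\<lambda>q. ((a when Poly_Mapping.single w 1 = q) when n = l + q)) = (\<lambda>q. ((a when n = l + Poly_Mapping.single w 1) when Poly_Mapping.single w 1 = q))" for l :: "'v \<Rightarrow>\<^sub>0 nat"
      by (auto simp: when_def fun_eq_iff)
    then show ?thesis by (simp only: lookup_mult lookup_single Sum_any_when_equal')
  qed
  also have "\<dots> = (\<Sum>l. (lk p l * a when 0 < lk n w) when l = n - Poly_Mapping.single w 1)"
    by (rule Sum_any.cong) (simp only: eq_add_single, auto simp: when_def)
  also have "\<dots> = (if 0 < lk n w then lk p (n - Poly_Mapping.single w 1) * a else 0)"
    by (simp add: when_def)
  finally show ?thesis .
qed


lemma lookup_cconst_mult: "lk (cconst a * (f::'v cpoly)) n = a * lk f n"
proof -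
  have "lk (cconst a * f) n = Sum_any (\<lambda>l. (a when 0 = l) * Sum_any (\<lambda>q. lk f q when n = l + q))"
    unfolding cconst_def lookup_mult by (simp only: lookup_single)
  also have "\<dots> = Sum_any (\<lambda>l. (a * Sum_any (\<lambda>q. lk f q when n = q)) when l = (0::'v \<Rightarrow>\<^sub>0 nat))"
    by (rule Sum_any.cong) (simp add: when_def)
  also have "\<dots> = a * lk f n" by simp
  finally show ?thesis .
qed

lemma lookup_cpderiv:
  fixes f :: "'v cpoly"
  shows "lk (cpderiv v f) n = lk f (n + Poly_Mapping.single v 1) * of_nat (lk n v + 1)"
proof -
  let ?s = "Poly_Mapping.single v (1::nat)"
  have "lk (cpderiv v f) n = (\<Sum>m\<in>Poly_Mapping.keys f. (lk f m * of_nat (lk m v) when m - ?s = n))"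
    unfolding cpderiv_def lookup_sum by (simp add: lookup_single)
  also have "\<dots> = (\<Sum>m\<in>Poly_Mapping.keys f. (lk f m * of_nat (lk m v) when m = n + ?s))"
  proof (rule sum.cong)
    fix m assume "m \<in> Poly_Mapping.keys f"
    show "(lk f m * of_nat (lk m v) when m - ?s = n) = (lk f m * of_nat (lk m v) when m = n + ?s)"
    proof (cases "lk m v = 0")
      case True then show ?thesis by simp
    next
      case False
      have "m - ?s = n \<longleftrightarrow> m = n + ?s"
        using eq_add_single[of m n v] False by auto
      then show ?thesis by simp
    qed
  qed simp
  also have "\<dots> = lk f (n + ?s) * of_nat (lk (n + ?s) v)"
    by (auto simp: when_def in_keys_iff)
  also have "\<dots> = lk f (n + ?s) * of_nat (lk n v + 1)"
    by (simp add: lookup_add)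
  finally show ?thesis .
qed

lemma cconst_cvar: "cconst a * cvar w = Poly_Mapping.single (Poly_Mapping.single w 1) a"
  unfolding cconst_def cvar_def by (simp add: mult_single)

lemma lookup_der:
  fixes f :: "('v::finite) cpoly"
  shows "lk (der c f) n = (\<Sum>v\<in>UNIV. \<Sum>w\<in>UNIV. (if 0 < lk n w then
      lk f (n - Poly_Mapping.single w 1 + Poly_Mapping.single v 1) * of_nat (lk (n - Poly_Mapping.single w 1) v + 1) * c v w else 0))"
  unfolding der_def cconst_cvar sum_distrib_left lookup_sum lookup_mult_var lookup_cpderiv
  by (simp add: mult_ac)


lemma lookup_map_key:
  assumes "inj f"
  shows "lk (Poly_Mapping.map_key f p) x = lk p (f x)"
proof -
  note assms[transfer_rule]
  show ?thesis by transfer simp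
qed

definition Mi :: "('a \<Rightarrow> 'b) \<Rightarrow> ('b \<Rightarrow>\<^sub>0 nat) \<Rightarrow> ('a \<Rightarrow>\<^sub>0 nat)" where
  "Mi r n = Poly_Mapping.map_key r n"

definition phi :: "('a \<Rightarrow> 'b) \<Rightarrow> 'a cpoly \<Rightarrow> 'b cpoly" where
  "phi r f = Poly_Mapping.map_key (Mi r) f"

locale ren =
  fixes r :: "'a::finite \<Rightarrow> 'b::finite" and r' :: "'b \<Rightarrow> 'a"
  assumes rr': "\<And>x. r' (r x) = x" and r'r: "\<And>y. r (r' y) = y"
begin

lemma inj_r: "inj r" by (metis rr' injI)
lemma bij_r: "bij r" by (metis rr' r'r bij_betw_byWitness top_greatest subset_UNIV)

lemma lookup_Mi: "lk (Mi r n) x = lk n (r x)"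
  unfolding Mi_def by (rule lookup_map_key[OF inj_r])

lemma lookup_Mi_gen: "inj s \<Longrightarrow> lk (Mi s n) x = lk n (s x)"
  unfolding Mi_def by (rule lookup_map_key)

lemma lookup_phi_gen: "inj (Mi s) \<Longrightarrow> lk (phi s f) n = lk f (Mi s n)"
  unfolding phi_def by (rule lookup_map_key)

lemma inj_Mi: "inj (Mi r)"
proof (rule injI)
  fix n n' assume "Mi r n = Mi r n'"
  then have "lk n (r (r' y)) = lk n' (r (r' y))" for y by (metis lookup_Mi)
  then show "n = n'" by (intro poly_mapping_eqI) (simp add: r'r)
qed

lemma lookup_phi: "lk (phi r f) n = lk f (Mi r n)"
  unfolding phi_def by (rule lookup_map_key[OF inj_Mi])

lemma phi_add: "phi r (f + g) = phi r f + phi r g"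
  by (rule poly_mapping_eqI) (simp add: lookup_phi lookup_add)

lemma phi_cconst: "phi r (cconst c * f) = cconst c * phi r f"
  by (rule poly_mapping_eqI) (simp add: lookup_phi lookup_cconst_mult)

lemma Mi_diff_single:
  "Mi r (n - Poly_Mapping.single (r w) 1 + Poly_Mapping.single (r v) 1)
   = Mi r n - Poly_Mapping.single w 1 + Poly_Mapping.single v 1"
  by (rule poly_mapping_eqI)
     (simp add: lookup_Mi lookup_add lookup_minus lookup_single when_def inj_r inj_eq)

lemma lookup_diff_r:
  "lk (n - Poly_Mapping.single (r w) 1) (r v) = lk (Mi r n - Poly_Mapping.single w 1) v"
  by (simp add: lookup_Mi lookup_add lookup_minus lookup_single when_def inj_r inj_eq)

lemma sum_r: "(\<Sum>y\<in>UNIV. g y) = (\<Sum>x\<in>UNIV. g (r x))"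
  using sum.reindex[of r UNIV g] inj_r bij_r by (simp add: bij_is_surj)

lemma phi_der:
  fixes f :: "'a cpoly" and c :: "'a \<Rightarrow> 'a \<Rightarrow> complex" and c' :: "'b \<Rightarrow> 'b \<Rightarrow> complex"
  assumes "\<And>v w. c' (r v) (r w) = c v w"
  shows "phi r (der c f) = der c' (phi r f)"
proof (rule poly_mapping_eqI)
  fix n
  show "lk (phi r (der c f)) n = lk (der c' (phi r f)) n"
    unfolding lookup_phi lookup_der
    apply (subst sum_r)
    apply (subst sum_r)
    apply (simp only: lookup_phi Mi_diff_single lookup_diff_r assms)
    apply (simp only: lookup_Mi)
    done
qed

lemma keys_phi: "Poly_Mapping.keys (phi r f) = Mi r -` Poly_Mapping.keys f"
  by (auto simp: in_keys_iff lookup_phi)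

lemma inj_r': "inj r'" by (metis r'r injI)

lemma Mi_Mi: "Mi r (Mi r' m) = m"
  by (rule poly_mapping_eqI) (simp add: lookup_Mi_gen[OF inj_r'] lookup_Mi_gen[OF inj_r] rr')

lemma Mi_Mi': "Mi r' (Mi r m) = m"
  by (rule poly_mapping_eqI) (simp add: lookup_Mi_gen[OF inj_r'] lookup_Mi_gen[OF inj_r] r'r)

lemma inj_Mi': "inj (Mi r')"
  by (metis Mi_Mi injI)

lemma phi_phi': "phi r' (phi r f) = f"
  by (rule poly_mapping_eqI) (simp add: lookup_phi_gen[OF inj_Mi'] lookup_phi_gen[OF inj_Mi] Mi_Mi)

lemma phi'_phi: "phi r (phi r' f) = f"
  by (rule poly_mapping_eqI) (simp add: lookup_phi_gen[OF inj_Mi'] lookup_phi_gen[OF inj_Mi] Mi_Mi')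

lemma bij_phi: "bij (phi r)"
  by (metis phi_phi' phi'_phi bij_betw_byWitness top_greatest subset_UNIV)

end


lemma sum_pair_UNIV: "(\<Sum>x\<in>(UNIV::('a::finite \<times> 'b::finite) set). g x) = (\<Sum>a\<in>UNIV. \<Sum>b\<in>UNIV. g (a,b))"
  by (simp add: sum.cartesian_product)

lemma sum_bool_UNIV: "(\<Sum>b\<in>(UNIV::bool set). g b) = g True + g False"
  by (simp add: UNIV_bool add.commute)

lemma sum_delta_UNIV:
  fixes G :: "'a::finite \<Rightarrow> 'b::comm_monoid_add"
  assumes "\<And>w. w \<noteq> v \<Longrightarrow> G w = 0"
  shows "(\<Sum>w\<in>UNIV. G w) = G v"
proof -
  have "(\<Sum>w\<in>UNIV. G w) = G v + (\<Sum>w\<in>UNIV - {v}. G w)"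
    by (simp add: sum.remove)
  also have "(\<Sum>w\<in>UNIV - {v}. G w) = 0" using assms by (intro sum.neutral) auto
  finally show ?thesis by simp
qed

lemma diag_der:
  fixes f :: "('v::finite) cpoly"
  assumes "\<And>v w. v \<noteq> w \<Longrightarrow> c v w = 0"
  shows "lk (der c f) n = lk f n * (\<Sum>v\<in>UNIV. of_nat (lk n v) * c v v)"
proof -
  have "lk (der c f) n = (\<Sum>v\<in>UNIV. (if 0 < lk n v then
      lk f (n - Poly_Mapping.single v 1 + Poly_Mapping.single v 1) * of_nat (lk (n - Poly_Mapping.single v 1) v + 1) * c v v else 0))"
    unfolding lookup_der
    by (rule sum.cong[OF refl], rule sum_delta_UNIV) (simp add: assms)
  also have "\<dots> = (\<Sum>v\<in>UNIV. lk f n * (of_nat (lk n v) * c v v))"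
  proof (rule sum.cong[OF refl])
    fix v
    show "(if 0 < lk n v then
      lk f (n - Poly_Mapping.single v 1 + Poly_Mapping.single v 1) * of_nat (lk (n - Poly_Mapping.single v 1) v + 1) * c v v else 0)
      = lk f n * (of_nat (lk n v) * c v v)"
    proof (cases "0 < lk n v")
      case True
      then have "n - Poly_Mapping.single v 1 + Poly_Mapping.single v 1 = n"
        using eq_add_single[of n "n - Poly_Mapping.single v 1" v] by simp
      moreover have "lk (n - Poly_Mapping.single v 1) v + 1 = lk n v"
        using True by (simp add: lookup_minus)
      ultimately show ?thesis using True by (simp add: mult_ac)
    qed simp
  qed
  finally show ?thesis by (simp add: sum_distrib_left)
qed

definition dV :: "bool \<Rightarrow> 'k \<Rightarrow> ('e::finite \<times> ('k \<times> bool) \<Rightarrow>\<^sub>0 nat) \<Rightarrow> nat" where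
  "dV b i m = (\<Sum>a\<in>UNIV. lk m (a,(i,b)))"

definition VC :: "('k \<Rightarrow> int) \<Rightarrow> ('e::finite \<times> ('k \<times> bool)) cpoly \<Rightarrow> bool" where
  "VC chi f \<longleftrightarrow> (\<forall>m\<in>Poly_Mapping.keys f. \<forall>i. int (dV True i m) - int (dV False i m) = chi i)"

lemma S_formula:
  fixes A :: "'k::finite \<times> bool \<Rightarrow> 'k \<times> bool \<Rightarrow> complex" and n :: "'e::finite \<times> ('k \<times> bool) \<Rightarrow>\<^sub>0 nat"
  assumes "\<And>i. A (i,False) (i,False) = - A (i,True) (i,True)"
  shows "(\<Sum>v\<in>UNIV. of_nat (lk n v) * A (snd v) (snd v))
     = (\<Sum>i\<in>UNIV. A (i,True) (i,True) * (of_nat (dV True i n) - of_nat (dV False i n)))"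
proof -
  have "(\<Sum>v\<in>UNIV. of_nat (lk n v) * A (snd v) (snd v))
      = (\<Sum>a\<in>UNIV. \<Sum>i\<in>UNIV. of_nat (lk n (a,(i,True))) * A (i,True) (i,True) + of_nat (lk n (a,(i,False))) * A (i,False) (i,False))"
    by (simp add: sum_pair_UNIV sum_bool_UNIV)
  also have "\<dots> = (\<Sum>i\<in>UNIV. \<Sum>a\<in>UNIV. A (i,True) (i,True) * (of_nat (lk n (a,(i,True))) - of_nat (lk n (a,(i,False)))))"
    by (subst sum.swap) (simp add: assms algebra_simps)
  also have "\<dots> = (\<Sum>i\<in>UNIV. A (i,True) (i,True) * (of_nat (dV True i n) - of_nat (dV False i n)))"
    by (simp add: dV_def sum_distrib_left sum_subtractf right_diff_distrib)
  finally show ?thesis .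
qed

lemma matvec_basis: "matvec A (basisU j) = (\<lambda>j'. A j' j)"
  unfolding matvec_def fun_eq_iff
  by (intro allI, subst sum_delta_UNIV[where v=j]) (auto simp: basisU_def)

lemma cartan_props:
  assumes "A \<in> cartan"
  shows "\<And>j j'. j' \<noteq> j \<Longrightarrow> A j' j = 0" and "\<And>i. A (i,False) (i,False) = - A (i,True) (i,True)"
proof -
  fix j j' :: "'a \<times> bool" assume "j' \<noteq> j"
  from assms obtain c where "matvec A (basisU j) = (\<lambda>x. c * basisU j x)"
    unfolding cartan_def by blast
  then have "matvec A (basisU j) j' = c * basisU j j'" by simp
  then show "A j' j = 0" using \<open>j' \<noteq> j\<close>
    by (simp only: matvec_basis) (simp add: basisU_def)
next
  fix i :: 'a
  from assms have "omega (matvec A (basisU (i,True))) (basisU (i,False)) + omega (basisU (i,True)) (matvec A (basisU (i,False))) = 0"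
    unfolding cartan_def sp_def by blast
  moreover have "omega (matvec A (basisU (i,True))) (basisU (i,False)) = A (i,True) (i,True)"
    unfolding omega_def matvec_basis by (subst sum_delta_UNIV[where v=i]) (auto simp: basisU_def)
  moreover have "omega (basisU (i,True)) (matvec A (basisU (i,False))) = A (i,False) (i,False)"
    unfolding omega_def matvec_basis by (subst sum_delta_UNIV[where v=i]) (auto simp: basisU_def)
  ultimately show "A (i,False) (i,False) = - A (i,True) (i,True)"
    by (metis add_eq_0_iff)
qed



lemma actU_lookup:
  fixes f :: "('e::finite \<times> ('k::finite \<times> bool)) cpoly"
  assumes "A \<in> cartan"
  shows "lk (actU A f) n = lk f n * (\<Sum>i\<in>UNIV. A (i,True) (i,True) * (of_nat (dV True i n) - of_nat (dV False i n)))"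
proof -
  let ?c = "(\<lambda>(a,j) (b,j'). if b = a then A j' j else 0) :: 'e \<times> ('k \<times> bool) \<Rightarrow> 'e \<times> ('k \<times> bool) \<Rightarrow> complex"
  have off: "?c v w = 0" if "v \<noteq> w" for v w
    using that cartan_props(1)[OF assms] by (cases v; cases w) auto
  have "lk (actU A f) n = lk f n * (\<Sum>v\<in>UNIV. of_nat (lk n v) * ?c v v)"
    unfolding actU_def by (rule diag_der) (rule off)
  also have "(\<Sum>v\<in>UNIV. of_nat (lk n v) * ?c v v) = (\<Sum>v\<in>UNIV. of_nat (lk n v) * A (snd v) (snd v))"
    by (rule sum.cong) (auto split: prod.split)
  also have "\<dots> = (\<Sum>i\<in>UNIV. A (i,True) (i,True) * (of_nat (dV True i n) - of_nat (dV False i n)))"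
    by (rule S_formula) (rule cartan_props(2)[OF assms])
  finally show ?thesis .
qed

definition A0 :: "'k \<Rightarrow> ('k \<times> bool \<Rightarrow> 'k \<times> bool \<Rightarrow> complex)" where
  "A0 i0 = (\<lambda>j' j. if j' = j \<and> fst j = i0 then (if snd j then 1 else -1) else 0)"

lemma matvec_A0: "matvec (A0 i0) u = (\<lambda>j. A0 i0 j j * u j)"
  unfolding matvec_def fun_eq_iff
  by (intro allI, subst sum_delta_UNIV[where v="_"]) (auto simp: A0_def)

lemma A0_cartan: "A0 (i0::'k::finite) \<in> cartan"
proof -
  have "A0 i0 \<in> sp"
    unfolding sp_def
  proof (intro CollectI allI)
    fix u v :: "'k \<times> bool \<Rightarrow> complex"
    show "omega (matvec (A0 i0) u) v + omega u (matvec (A0 i0) v) = 0"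
      unfolding omega_def matvec_A0 sum.distrib[symmetric]
      by (rule sum.neutral) (auto simp: A0_def algebra_simps)
  qed
  moreover have "\<exists>c. matvec (A0 i0) (basisU j) = (\<lambda>x. c * basisU j x)" for j
    by (rule exI[of _ "A0 i0 j j"]) (auto simp: matvec_A0 basisU_def fun_eq_iff)
  ultimately show ?thesis unfolding cartan_def by blast
qed

lemma Vwt_char:
  fixes f :: "('e::finite \<times> ('k::finite \<times> bool)) cpoly"
  shows "f \<in> Vwt chi \<longleftrightarrow> VC chi f"
proof
  assume f: "f \<in> Vwt chi"
  show "VC chi f" unfolding VC_def
  proof (intro ballI allI)
    fix m i0 assume m: "m \<in> Poly_Mapping.keys f"
    have "actU (A0 i0) f = cconst (wt chi (A0 i0)) * f"
      using f A0_cartan unfolding Vwt_def by blast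
    then have "lk (actU (A0 i0) f) m = lk (cconst (wt chi (A0 i0)) * f) m" by simp
    then have "lk f m * (\<Sum>i\<in>UNIV. A0 i0 (i,True) (i,True) * (of_nat (dV True i m) - of_nat (dV False i m)))
       = wt chi (A0 i0) * lk f m"
      by (simp only: actU_lookup[OF A0_cartan] lookup_cconst_mult)
    moreover have "lk f m \<noteq> 0" using m by (simp add: in_keys_iff)
    ultimately have "(\<Sum>i\<in>UNIV. A0 i0 (i,True) (i,True) * (of_nat (dV True i m) - of_nat (dV False i m)))
       = wt chi (A0 i0)" by (simp add: mult.commute)
    moreover have "(\<Sum>i\<in>UNIV. A0 i0 (i,True) (i,True) * (of_nat (dV True i m) - of_nat (dV False i m)))
       = of_nat (dV True i0 m) - of_nat (dV False i0 m)"
      by (subst sum_delta_UNIV[where v=i0]) (auto simp: A0_def)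
    moreover have "wt chi (A0 i0) = of_int (chi i0)"
      unfolding wt_def by (subst sum_delta_UNIV[where v=i0]) (auto simp: A0_def)
    ultimately have "(of_int (int (dV True i0 m) - int (dV False i0 m)) :: complex) = of_int (chi i0)"
      by simp
    then show "int (dV True i0 m) - int (dV False i0 m) = chi i0"
      using of_int_eq_iff by blast
  qed
next
  assume v: "VC chi f"
  show "f \<in> Vwt chi" unfolding Vwt_def
  proof (intro CollectI ballI)
    fix A :: "'k \<times> bool \<Rightarrow> 'k \<times> bool \<Rightarrow> complex" assume A: "A \<in> cartan"
    show "actU A f = cconst (wt chi A) * f"
    proof (rule poly_mapping_eqI)
      fix n
      show "lk (actU A f) n = lk (cconst (wt chi A) * f) n"
      proof (cases "n \<in> Poly_Mapping.keys f")
        case False then show ?thesis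
          by (simp add: actU_lookup[OF A] lookup_cconst_mult in_keys_iff)
      next
        case True
        have "(of_nat (dV True i n) - of_nat (dV False i n) :: complex) = of_int (chi i)" for i
        proof -
          have "int (dV True i n) - int (dV False i n) = chi i" using v True unfolding VC_def by blast
          then have "(of_int (int (dV True i n) - int (dV False i n)) :: complex) = of_int (chi i)" by simp
          then show ?thesis by simp
        qed
        then show ?thesis
          by (simp only: actU_lookup[OF A] lookup_cconst_mult) (simp add: wt_def mult.commute)
      qed
    qed
  qed
qed



definition dL :: "bool \<Rightarrow> 'k \<Rightarrow> ('k \<times> (bool \<times> 'e::finite) \<Rightarrow>\<^sub>0 nat) \<Rightarrow> nat" where
  "dL b i n = (\<Sum>a\<in>UNIV. lk n (i,(b,a)))"

definition DL :: "('k \<times> (bool \<times> 'e::finite) \<Rightarrow>\<^sub>0 nat) \<Rightarrow> 'k \<Rightarrow> int" where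
  "DL n i = int (dL True i n) - int (dL False i n)"

definition LC :: "('k \<Rightarrow> int) \<Rightarrow> ('k \<times> (bool \<times> 'e::finite)) cpoly \<Rightarrow> bool" where
  "LC chi g \<longleftrightarrow> (\<forall>n\<in>Poly_Mapping.keys g. \<forall>i. DL n i = chi i)"

lemma DL_add: "DL (n + n') i = DL n i + DL n' i"
  by (simp add: DL_def dL_def lookup_add sum.distrib)

lemma DL_zero: "DL 0 i = 0"
  by (simp add: DL_def dL_def)

lemma lookup_embmon: "lk (embmon i m) (i',v) = (if i' = i then lk m v else 0)"
proof -
  have "lk (embmon i m) (i',v) = (\<Sum>x\<in>Poly_Mapping.keys m. (lk m x when (i,x) = (i',v)))"
    unfolding embmon_def lookup_sum by (simp add: lookup_single)
  also have "\<dots> = (if i' = i then lk m v else 0)"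
    by (auto simp: when_def in_keys_iff)
  finally show ?thesis .
qed

lemma DL_embmon: "DL (embmon i m) i' = (if i' = i then int (blkdeg True m) - int (blkdeg False m) else 0)"
  by (simp add: DL_def dL_def lookup_embmon blkdeg_def)

lemma keys_cconst_mult: "Poly_Mapping.keys (cconst c * g) \<subseteq> Poly_Mapping.keys g"
proof
  fix n assume "n \<in> Poly_Mapping.keys (cconst c * g)"
  then have "c * lk g n \<noteq> 0" by (metis in_keys_iff lookup_cconst_mult)
  then show "n \<in> Poly_Mapping.keys g" by (metis in_keys_iff mult_zero_right)
qed

lemma keys_emb: "Poly_Mapping.keys (emb i f) \<subseteq> embmon i ` Poly_Mapping.keys f"
proof
  fix n assume "n \<in> Poly_Mapping.keys (emb i f)"
  then have "n \<in> (\<Union>m\<in>Poly_Mapping.keys f. Poly_Mapping.keys (Poly_Mapping.single (embmon i m) (lk f m)))"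
    using subsetD[OF keys_sum[of "\<lambda>m. Poly_Mapping.single (embmon i m) (lk f m)" "Poly_Mapping.keys f"]]
    unfolding emb_def by simp
  then obtain m where m: "m \<in> Poly_Mapping.keys f" "n \<in> Poly_Mapping.keys (Poly_Mapping.single (embmon i m) (lk f m))"
    by blast
  then have "n = embmon i m" by (simp only: keys_single) (simp split: if_splits)
  then show "n \<in> embmon i ` Poly_Mapping.keys f" using m(1) by blast
qed

lemma keys_prod_emb:
  fixes f :: "'k \<Rightarrow> (bool \<times> 'e::finite) cpoly"
  assumes "\<forall>i. f i \<in> Lsp (chi i)" "finite S"
  shows "\<forall>n\<in>Poly_Mapping.keys (\<Prod>i\<in>S. emb i (f i)). \<forall>i'. DL n i' = (if i' \<in> S then chi i' else 0)"
  using assms(2)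
proof (induction S rule: finite_induct)
  case empty
  then show ?case by (simp add: DL_zero)
next
  case (insert x S)
  show ?case
  proof (intro ballI allI)
    fix n i' assume n: "n \<in> Poly_Mapping.keys (\<Prod>i\<in>insert x S. emb i (f i))"
    have "(\<Prod>i\<in>insert x S. emb i (f i)) = emb x (f x) * (\<Prod>i\<in>S. emb i (f i))"
      using insert.hyps by (rule prod.insert)
    with n have "n \<in> Poly_Mapping.keys (emb x (f x) * (\<Prod>i\<in>S. emb i (f i)))"
      by simp
    then obtain a b where ab: "n = a + b" "a \<in> Poly_Mapping.keys (emb x (f x))" "b \<in> Poly_Mapping.keys (\<Prod>i\<in>S. emb i (f i))"
      using keys_mult[of "emb x (f x)" "\<Prod>i\<in>S. emb i (f i)"] by blast
    have "a \<in> embmon x ` Poly_Mapping.keys (f x)" using ab(2) keys_emb[of x "f x"] by blast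
    then obtain m where m: "a = embmon x m" "m \<in> Poly_Mapping.keys (f x)" by blast
    from assms(1) m(2) have "\<exists>d. blkdeg False m = d \<and> int (blkdeg True m) = int d + chi x"
      unfolding Lsp_def by blast
    then have "int (blkdeg True m) - int (blkdeg False m) = chi x" by auto
    then have "DL a i' = (if i' = x then chi x else 0)"
      unfolding m(1) DL_embmon using \<open>int (blkdeg True m) - int (blkdeg False m) = chi x\<close> by simp
    moreover have "DL b i' = (if i' \<in> S then chi i' else 0)" using insert.IH ab(3) by blast
    ultimately show "DL n i' = (if i' \<in> insert x S then chi i' else 0)"
      using ab(1) insert.hyps(2) by (cases "i' = x") (simp_all add: DL_add)
  qed
qed

lemma Ltens_sub: "g \<in> Ltens chi \<Longrightarrow> LC chi g"
proof -
  assume "g \<in> Ltens chi"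
  then obtain N c G where g: "g = (\<Sum>j<(N::nat). cconst (c j) * G j)"
    and G: "\<forall>j<N. G j \<in> {\<Prod>i\<in>UNIV. emb i (f i) | f. \<forall>i. f i \<in> Lsp (chi i)}"
    unfolding Ltens_def cspan_def by blast
  show "LC chi g" unfolding LC_def
  proof (intro ballI allI)
    fix n i assume "n \<in> Poly_Mapping.keys g"
    then obtain j where j: "j < N" "n \<in> Poly_Mapping.keys (cconst (c j) * G j)"
      using subsetD[OF keys_sum[of "\<lambda>j. cconst (c j) * G j" "{..<N}"]] g by blast
    then have nG: "n \<in> Poly_Mapping.keys (G j)" using keys_cconst_mult by blast
    from G j(1) obtain f where f: "G j = (\<Prod>i\<in>UNIV. emb i (f i))" "\<forall>i. f i \<in> Lsp (chi i)" by blast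
    show "DL n i = chi i" using keys_prod_emb[OF f(2), of UNIV] nG f(1) by simp
  qed
qed



definition mres :: "'k \<Rightarrow> ('k \<times> 'v \<Rightarrow>\<^sub>0 nat) \<Rightarrow> ('v \<Rightarrow>\<^sub>0 nat)" where
  "mres i n = Poly_Mapping.map_key (Pair i) n"

lemma lookup_mres: "lk (mres i n) v = lk n (i,v)"
  unfolding mres_def by (rule lookup_map_key) (simp add: inj_def)

lemma emb_single: "emb i (Poly_Mapping.single m 1) = Poly_Mapping.single (embmon i m) 1"
  unfolding emb_def by simp

lemma prod_single:
  fixes h :: "'k \<Rightarrow> ('v \<Rightarrow>\<^sub>0 nat)"
  assumes "finite S"
  shows "(\<Prod>i\<in>S. (Poly_Mapping.single (h i) 1 :: 'v cpoly)) = Poly_Mapping.single (\<Sum>i\<in>S. h i) 1"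
  using assms by (induction S rule: finite_induct) (simp_all add: mult_single)

lemma sum_embmon_mres:
  fixes n :: "('k::finite) \<times> 'v \<Rightarrow>\<^sub>0 nat"
  shows "(\<Sum>i\<in>UNIV. embmon i (mres i n)) = n"
proof (rule poly_mapping_eqI)
  fix x :: "'k \<times> 'v"
  obtain i' v where x: "x = (i',v)" by (cases x)
  have "lk (\<Sum>i\<in>UNIV. embmon i (mres i n)) x = (\<Sum>i\<in>UNIV. (if i' = i then lk (mres i n) v else 0))"
    unfolding lookup_sum x lookup_embmon by simp
  also have "\<dots> = lk n x" unfolding x by (simp add: lookup_mres)
  finally show "lk (\<Sum>i\<in>UNIV. embmon i (mres i n)) x = lk n x" .
qed

lemma blkdeg_mres: "blkdeg b (mres i n) = dL b i n"
  by (simp add: blkdeg_def dL_def lookup_mres)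

lemma single_in_Ltens_gen:
  fixes n :: "('k::finite) \<times> (bool \<times> 'e::finite) \<Rightarrow>\<^sub>0 nat"
  assumes "\<forall>i. DL n i = chi i"
  shows "Poly_Mapping.single n 1 \<in> {\<Prod>i\<in>UNIV. emb i (f i) | f. \<forall>i. f i \<in> Lsp (chi i)}"
proof -
  let ?f = "\<lambda>i. Poly_Mapping.single (mres i n) (1::complex)"
  have p: "(\<Prod>i\<in>UNIV. emb i (?f i)) = Poly_Mapping.single n 1"
    by (simp add: emb_single prod_single sum_embmon_mres)
  have l: "?f i \<in> Lsp (chi i)" for i
  proof -
    have "DL n i = chi i" using assms by blast
    then show ?thesis unfolding Lsp_def by (auto simp: blkdeg_mres DL_def)
  qed
  show ?thesis by (rule CollectI, rule exI[of _ ?f]) (simp add: p l)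
qed

lemma poly_expand:
  fixes g :: "'v cpoly"
  shows "g = (\<Sum>n\<in>Poly_Mapping.keys g. cconst (lk g n) * Poly_Mapping.single n 1)"
proof (rule poly_mapping_eqI)
  fix k
  have "lk (\<Sum>n\<in>Poly_Mapping.keys g. cconst (lk g n) * Poly_Mapping.single n 1) k
     = (\<Sum>n\<in>Poly_Mapping.keys g. (if n = k then lk g n else 0))"
    unfolding lookup_sum lookup_cconst_mult lookup_single by (rule sum.cong) (auto simp: when_def)
  also have "\<dots> = lk g k" by (simp add: in_keys_iff)
  finally show "lk g k = lk (\<Sum>n\<in>Poly_Mapping.keys g. cconst (lk g n) * Poly_Mapping.single n 1) k" by simp
qed

lemma Ltens_super:
  fixes g :: "(('k::finite) \<times> (bool \<times> 'e::finite)) cpoly"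
  assumes "LC chi g"
  shows "g \<in> Ltens chi"
proof -
  let ?K = "Poly_Mapping.keys g"
  obtain h where h: "bij_betw h {0..<card ?K} ?K" using ex_bij_betw_nat_finite finite_keys by blast
  have "g = (\<Sum>n\<in>?K. cconst (lk g n) * Poly_Mapping.single n 1)" by (rule poly_expand)
  also have "\<dots> = (\<Sum>j\<in>{0..<card ?K}. cconst (lk g (h j)) * Poly_Mapping.single (h j) 1)"
    using sum.reindex_bij_betw[OF h, of "\<lambda>n. cconst (lk g n) * Poly_Mapping.single n 1"] by simp
  also have "\<dots> = (\<Sum>j<card ?K. cconst (lk g (h j)) * Poly_Mapping.single (h j) 1)"
    by (simp add: atLeast0LessThan)
  finally have geq: "g = (\<Sum>j<card ?K. cconst (lk g (h j)) * Poly_Mapping.single (h j) 1)" .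
  have "\<forall>j<card ?K. Poly_Mapping.single (h j) 1 \<in> {\<Prod>i\<in>UNIV. emb i (f i) | f. \<forall>i. f i \<in> Lsp (chi i)}"
  proof (intro allI impI)
    fix j assume "j < card ?K"
    then have "h j \<in> ?K" using h by (auto simp: bij_betw_def)
    then have "\<forall>i. DL (h j) i = chi i" using assms unfolding LC_def by blast
    then show "Poly_Mapping.single (h j) 1 \<in> {\<Prod>i\<in>UNIV. emb i (f i) | f. \<forall>i. f i \<in> Lsp (chi i)}"
      by (rule single_in_Ltens_gen)
  qed
  then show ?thesis unfolding Ltens_def cspan_def
    by (intro CollectI exI[of _ "card ?K"] exI[of _ "\<lambda>j. lk g (h j)"] exI[of _ "\<lambda>j. Poly_Mapping.single (h j) 1"] conjI geq)
qed



definition rho :: "'e \<times> ('k \<times> bool) \<Rightarrow> 'k \<times> (bool \<times> 'e)" where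
  "rho x = (case x of (a,(i,b)) \<Rightarrow> (i,(b,a)))"

definition rho' :: "'k \<times> (bool \<times> 'e) \<Rightarrow> 'e \<times> ('k \<times> bool)" where
  "rho' y = (case y of (i,(b,a)) \<Rightarrow> (a,(i,b)))"

lemma ren_rho: "ren (rho :: ('e::finite) \<times> (('k::finite) \<times> bool) \<Rightarrow> _) rho'"
  by unfold_locales (auto simp: rho_def rho'_def split: prod.splits)

lemma VC_LC:
  fixes f :: "(('e::finite) \<times> (('k::finite) \<times> bool)) cpoly"
  shows "LC chi (phi rho f) \<longleftrightarrow> VC chi f"
proof -
  interpret ren "rho :: 'e \<times> ('k \<times> bool) \<Rightarrow> _" rho' by (rule ren_rho)
  have dL_Mi: "dL b i n = dV b i (Mi rho n)" for b i and n :: "'k \<times> (bool \<times> 'e) \<Rightarrow>\<^sub>0 nat"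
    by (simp add: dL_def dV_def lookup_Mi rho_def)
  let ?P = "\<lambda>m. \<forall>i. int (dV True i m) - int (dV False i m) = chi i"
  have "LC chi (phi rho f) \<longleftrightarrow> (\<forall>n. Mi rho n \<in> Poly_Mapping.keys f \<longrightarrow> ?P (Mi rho n))"
    unfolding LC_def keys_phi DL_def dL_Mi by auto
  also have "\<dots> \<longleftrightarrow> (\<forall>m\<in>Poly_Mapping.keys f. ?P m)"
    by (metis Mi_Mi)
  finally show ?thesis unfolding VC_def .
qed

theorem mainTheorem3:
  fixes chi :: "'k::finite \<Rightarrow> int"
  shows "\<exists>\<phi> :: ('e::finite \<times> ('k \<times> bool)) cpoly \<Rightarrow> ('k \<times> (bool \<times> 'e)) cpoly.
           bij_betw \<phi> (Vwt chi) (Ltens chi)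
         \<and> (\<forall>f\<in>Vwt chi. \<forall>g\<in>Vwt chi. \<phi> (f + g) = \<phi> f + \<phi> g)
         \<and> (\<forall>c. \<forall>f\<in>Vwt chi. \<phi> (cconst c * f) = cconst c * \<phi> f)
         \<and> (\<forall>X. \<forall>f\<in>Vwt chi. \<phi> (actE X f) = actT X (\<phi> f))"
proof -
  interpret ren "rho :: 'e \<times> ('k \<times> bool) \<Rightarrow> _" rho' by (rule ren_rho)
  have img: "phi (rho :: 'e \<times> ('k \<times> bool) \<Rightarrow> _) ` Vwt chi = Ltens chi"
  proof
    show "phi (rho :: 'e \<times> ('k \<times> bool) \<Rightarrow> _) ` Vwt chi \<subseteq> Ltens chi"
    proof
      fix g assume "g \<in> phi rho ` Vwt chi"
      then obtain f where f: "f \<in> Vwt chi" "g = phi rho f" by blast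
      then have "VC chi f" using Vwt_char by blast
      then have "LC chi g" using f(2) VC_LC by blast
      then show "g \<in> Ltens chi" by (rule Ltens_super)
    qed
  next
    show "Ltens chi \<subseteq> phi (rho :: 'e \<times> ('k \<times> bool) \<Rightarrow> _) ` Vwt chi"
    proof
      fix g :: "('k \<times> (bool \<times> 'e)) cpoly" assume "g \<in> Ltens chi"
      then have "LC chi g" by (rule Ltens_sub)
      then have "LC chi (phi rho (phi rho' g))" by (simp add: phi'_phi)
      then have "VC chi (phi rho' g)" using VC_LC by blast
      then have "phi rho' g \<in> Vwt chi" using Vwt_char by blast
      then show "g \<in> phi (rho :: 'e \<times> ('k \<times> bool) \<Rightarrow> _) ` Vwt chi" using phi'_phi[of g] by (metis image_eqI)
    qed
  qed
  have bij: "bij_betw (phi (rho :: 'e \<times> ('k \<times> bool) \<Rightarrow> _)) (Vwt chi) (Ltens chi)"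
    unfolding bij_betw_def using img bij_phi bij_is_inj inj_on_subset by blast
  have act: "phi rho (actE X f) = actT X (phi rho f)" for X and f :: "('e \<times> ('k \<times> bool)) cpoly"
    unfolding actE_def actT_def
    by (rule phi_der) (auto simp: rho_def split: prod.splits)
  show ?thesis
    by (rule exI[of _ "phi rho"]) (simp add: bij phi_add phi_cconst act)
qed

end
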